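(* Let $\omega\ge2$ and let $\Gamma$ be an $\omega$-clique regular finite simple graph with vertices $v_1,\dots,v_n$, adjacency matrix $A$ and degree matrix $D=\mathrm{diag}(d(v_1),\dots,d(v_n))$, and with cliques of order $\omega$ listed $c_1,\dots,c_m$. Let $A_C$ be the adjacency matrix of $C_\omega(\Gamma)$ in this order, and let $R$ be the $n\times m$ matrix with $R_{ij}=1$ if $v_i\in c_j$ and $R_{ij}=0$ otherwise. Then (1) $R^TR=A_C+\omega I_m$, and (2) $RR^T=A+\frac{1}{\omega-1}D$.
   Context: A graph is $\omega$-clique regular if it has a nonempty edge set and every edge lies in exactly one clique of order $\omega$. $C_\omega(\Gamma)$ has as vertices the cliques of order $\omega$ of $\Gamma$, two distinct ones adjacent iff they have nonempty intersection. *)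

theory Defs
  imports "Jordan_Normal_Form.Matrix"
begin

definition simple_graph :: "'a set \<Rightarrow> ('a \<Rightarrow> 'a \<Rightarrow> bool) \<Rightarrow> bool" where
  "simple_graph V E \<longleftrightarrow> finite V \<and> (\<forall>x y. E x y \<longrightarrow> x \<in> V \<and> y \<in> V)
     \<and> (\<forall>x y. E x y \<longrightarrow> E y x) \<and> (\<forall>x. \<not> E x x)"

definition is_clique :: "'a set \<Rightarrow> ('a \<Rightarrow> 'a \<Rightarrow> bool) \<Rightarrow> 'a set \<Rightarrow> bool" where
  "is_clique V E K \<longleftrightarrow> K \<subseteq> V \<and> (\<forall>x\<in>K. \<forall>y\<in>K. x \<noteq> y \<longrightarrow> E x y)"

definition cliques_of_order :: "'a set \<Rightarrow> ('a \<Rightarrow> 'a \<Rightarrow> bool) \<Rightarrow> nat \<Rightarrow> 'a set set" where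
  "cliques_of_order V E w = {K. is_clique V E K \<and> finite K \<and> card K = w}"

definition clique_regular :: "'a set \<Rightarrow> ('a \<Rightarrow> 'a \<Rightarrow> bool) \<Rightarrow> nat \<Rightarrow> bool" where
  "clique_regular V E w \<longleftrightarrow> (\<exists>x y. E x y) \<and>
     (\<forall>x y. E x y \<longrightarrow> (\<exists>!K. K \<in> cliques_of_order V E w \<and> x \<in> K \<and> y \<in> K))"

definition degree :: "'a set \<Rightarrow> ('a \<Rightarrow> 'a \<Rightarrow> bool) \<Rightarrow> 'a \<Rightarrow> nat" where
  "degree V E x = card {y \<in> V. E x y}"

text \<open>Matrices w.r.t. the vertex ordering vs = [v_1,...,v_n] and the clique
ordering cs = [c_1,...,c_m] (0-based indices).\<close>
definition adj_matrix :: "'a list \<Rightarrow> ('a \<Rightarrow> 'a \<Rightarrow> bool) \<Rightarrow> real mat" where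
  "adj_matrix vs E = mat (length vs) (length vs) (\<lambda>(i,j). if E (vs!i) (vs!j) then 1 else 0)"

definition degree_matrix :: "'a list \<Rightarrow> ('a \<Rightarrow> 'a \<Rightarrow> bool) \<Rightarrow> real mat" where
  "degree_matrix vs E = mat (length vs) (length vs)
     (\<lambda>(i,j). if i = j then real (degree (set vs) E (vs!i)) else 0)"

definition clique_graph_adj_matrix :: "'a set list \<Rightarrow> real mat" where
  "clique_graph_adj_matrix cs = mat (length cs) (length cs)
     (\<lambda>(i,j). if i \<noteq> j \<and> cs!i \<inter> cs!j \<noteq> {} then 1 else 0)"

definition incidence_matrix :: "'a list \<Rightarrow> 'a set list \<Rightarrow> real mat" where
  "incidence_matrix vs cs = mat (length vs) (length cs)
     (\<lambda>(i,j). if vs!i \<in> cs!j then 1 else 0)"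

end

theory Submission imports Defs begin

lemma sum_ind: "finite A \<Longrightarrow> (\<Sum>i\<in>A. (if P i then 1 else 0::real)) = real (card {i\<in>A. P i})"
proof -
  assume f: "finite A"
  have "(\<Sum>i\<in>A. (if P i then 1 else 0::real)) = (\<Sum>i\<in>{i\<in>A. P i}. 1)"
    using sum.inter_filter[OF f, of "\<lambda>_. 1::real" P] by simp
  then show ?thesis by simp
qed

lemma card_idx: assumes "distinct vs"
  shows "card {i\<in>{0..<length vs}. vs!i \<in> S} = card (S \<inter> set vs)"
proof -
  have "(\<lambda>i. vs!i) ` {i\<in>{0..<length vs}. vs!i \<in> S} = S \<inter> set vs"
    by (auto simp: in_set_conv_nth)
  moreover have "inj_on (\<lambda>i. vs!i) {i\<in>{0..<length vs}. vs!i \<in> S}"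
    using assms by (auto simp: inj_on_def nth_eq_iff_index_eq)
  ultimately show ?thesis by (metis card_image)
qed

lemma card_idx2: assumes "distinct cs"
  shows "card {j\<in>{0..<length cs}. P (cs!j)} = card {K\<in>set cs. P K}"
proof -
  have "(\<lambda>i. cs!i) ` {j\<in>{0..<length cs}. P (cs!j)} = {K\<in>set cs. P K}"
    by (auto simp: in_set_conv_nth)
  moreover have "inj_on (\<lambda>i. cs!i) {j\<in>{0..<length cs}. P (cs!j)}"
    using assms by (auto simp: inj_on_def nth_eq_iff_index_eq)
  ultimately show ?thesis by (metis card_image)
qed

lemma RtR_entry:
  assumes "j < length cs" "k < length cs" "distinct vs"
  shows "(transpose_mat (incidence_matrix vs cs) * incidence_matrix vs cs) $$ (j,k)
     = real (card (cs!j \<inter> cs!k \<inter> set vs))"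
proof -
  have "(transpose_mat (incidence_matrix vs cs) * incidence_matrix vs cs) $$ (j,k)
     = (\<Sum>i\<in>{0..<length vs}. (if vs!i \<in> cs!j \<inter> cs!k then 1 else 0::real))"
    using assms unfolding incidence_matrix_def
    by (auto simp: scalar_prod_def intro!: sum.cong)
  also have "\<dots> = real (card (cs!j \<inter> cs!k \<inter> set vs))"
    unfolding sum_ind[OF finite_atLeastLessThan] using card_idx[OF assms(3), of "cs!j \<inter> cs!k"] by simp
  finally show ?thesis .
qed

lemma RRt_entry:
  assumes "i < length vs" "i' < length vs" "distinct cs"
  shows "(incidence_matrix vs cs * transpose_mat (incidence_matrix vs cs)) $$ (i,i')
     = real (card {K\<in>set cs. vs!i \<in> K \<and> vs!i' \<in> K})"
proof -
  have "(incidence_matrix vs cs * transpose_mat (incidence_matrix vs cs)) $$ (i,i')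
     = (\<Sum>j\<in>{0..<length cs}. (if vs!i \<in> cs!j \<and> vs!i' \<in> cs!j then 1 else 0::real))"
    using assms unfolding incidence_matrix_def
    by (auto simp: scalar_prod_def intro!: sum.cong)
  also have "\<dots> = real (card {K\<in>set cs. vs!i \<in> K \<and> vs!i' \<in> K})"
    unfolding sum_ind[OF finite_atLeastLessThan] using card_idx2[OF assms(3), of "\<lambda>K. vs!i \<in> K \<and> vs!i' \<in> K"] by simp
  finally show ?thesis .
qed


lemma inter_le1:
  assumes cr: "clique_regular V E w" and K1: "K1 \<in> cliques_of_order V E w"
    and K2: "K2 \<in> cliques_of_order V E w" and ne: "K1 \<noteq> K2"
  shows "card (K1 \<inter> K2) \<le> 1"
proof (rule ccontr)
  assume "\<not> card (K1 \<inter> K2) \<le> 1"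
  moreover have "finite (K1 \<inter> K2)" using K1 by (auto simp: cliques_of_order_def)
  ultimately obtain x y where xy: "x \<in> K1 \<inter> K2" "y \<in> K1 \<inter> K2" "x \<noteq> y"
    using card_le_Suc0_iff_eq by (metis One_nat_def)
  have "E x y" using K1 xy by (auto simp: cliques_of_order_def is_clique_def)
  then have "\<exists>!K. K \<in> cliques_of_order V E w \<and> x \<in> K \<and> y \<in> K"
    using cr by (auto simp: clique_regular_def)
  then show False using K1 K2 xy ne by auto
qed

lemma inter_card:
  assumes cr: "clique_regular V E w" and K1: "K1 \<in> cliques_of_order V E w"
    and K2: "K2 \<in> cliques_of_order V E w" and ne: "K1 \<noteq> K2"
  shows "card (K1 \<inter> K2) = (if K1 \<inter> K2 \<noteq> {} then 1 else 0)"
proof -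
  have "finite (K1 \<inter> K2)" using K1 by (auto simp: cliques_of_order_def)
  then show ?thesis using inter_le1[OF assms]
    by (metis card_0_eq le_neq_implies_less less_one card.empty)
qed

lemma pair_count:
  assumes cr: "clique_regular V E w" and xy: "x \<noteq> y"
  shows "card {K\<in>cliques_of_order V E w. x \<in> K \<and> y \<in> K} = (if E x y then 1 else 0)"
proof (cases "E x y")
  case True
  then have "\<exists>!K. K \<in> cliques_of_order V E w \<and> x \<in> K \<and> y \<in> K"
    using cr by (auto simp: clique_regular_def)
  then obtain K0 where "{K\<in>cliques_of_order V E w. x \<in> K \<and> y \<in> K} = {K0}" by blast
  then show ?thesis using True by simp
next
  case False
  then have "{K\<in>cliques_of_order V E w. x \<in> K \<and> y \<in> K} = {}"
    using xy by (auto simp: cliques_of_order_def is_clique_def)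
  then show ?thesis using False by (simp only: card.empty) simp
qed

lemma degree_count:
  assumes sg: "simple_graph V E" and cr: "clique_regular V E w" and x: "x \<in> V"
  shows "degree V E x = (w - 1) * card {K\<in>cliques_of_order V E w. x \<in> K}"
proof -
  let ?C = "{K\<in>cliques_of_order V E w. x \<in> K}"
  have fV: "finite V" using sg by (simp add: simple_graph_def)
  have fC: "finite ?C"
    by (rule finite_subset[of _ "Pow V"]) (auto simp: cliques_of_order_def is_clique_def fV)
  have eq: "{y\<in>V. E x y} = (\<Union>K\<in>?C. K - {x})"
  proof
    show "{y\<in>V. E x y} \<subseteq> (\<Union>K\<in>?C. K - {x})"
    proof
      fix y assume "y \<in> {y\<in>V. E x y}"
      then have "E x y" "x \<noteq> y" using sg by (auto simp: simple_graph_def)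
      then obtain K where "K \<in> cliques_of_order V E w" "x \<in> K" "y \<in> K"
        using cr unfolding clique_regular_def by blast
      then show "y \<in> (\<Union>K\<in>?C. K - {x})" using \<open>x \<noteq> y\<close> by blast
    qed
    show "(\<Union>K\<in>?C. K - {x}) \<subseteq> {y\<in>V. E x y}"
      by (auto simp: cliques_of_order_def is_clique_def)
  qed
  have "card (\<Union>K\<in>?C. K - {x}) = (\<Sum>K\<in>?C. card (K - {x}))"
  proof (rule card_UN_disjoint[OF fC])
    show "\<forall>K\<in>?C. finite (K - {x})" by (auto simp: cliques_of_order_def)
    show "\<forall>K1\<in>?C. \<forall>K2\<in>?C. K1 \<noteq> K2 \<longrightarrow> (K1 - {x}) \<inter> (K2 - {x}) = {}"
    proof (intro ballI impI)
      fix K1 K2 assume "K1 \<in> ?C" "K2 \<in> ?C" "K1 \<noteq> K2"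
      then have "card (K1 \<inter> K2) \<le> 1" using inter_le1[OF cr] by auto
      moreover have "finite (K1 \<inter> K2)" using \<open>K1 \<in> ?C\<close> by (auto simp: cliques_of_order_def)
      moreover have "x \<in> K1 \<inter> K2" using \<open>K1 \<in> ?C\<close> \<open>K2 \<in> ?C\<close> by auto
      ultimately show "(K1 - {x}) \<inter> (K2 - {x}) = {}"
        using card_le_Suc0_iff_eq by (metis Diff_iff Int_iff One_nat_def disjoint_iff singletonI)
    qed
  qed
  also have "\<dots> = (\<Sum>K\<in>?C. w - 1)"
    by (rule sum.cong) (auto simp: cliques_of_order_def)
  finally show ?thesis unfolding degree_def eq by (simp add: mult.commute)
qed


theorem lemma4:
  fixes vs :: "'a list" and E :: "'a \<Rightarrow> 'a \<Rightarrow> bool" and cs :: "'a set list" and w :: nat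
  assumes "w \<ge> 2"
    and "simple_graph (set vs) E"
    and "distinct vs"
    and "clique_regular (set vs) E w"
    and "distinct cs"
    and "set cs = cliques_of_order (set vs) E w"
  shows "(transpose_mat (incidence_matrix vs cs) * incidence_matrix vs cs
           = clique_graph_adj_matrix cs + of_nat w \<cdot>\<^sub>m 1\<^sub>m (length cs))
         \<and> ( incidence_matrix vs cs * transpose_mat (incidence_matrix vs cs)
           = adj_matrix vs E + (1 / (real w - 1)) \<cdot>\<^sub>m degree_matrix vs E)"
proof
  note w = assms(1) and sg = assms(2) and dv = assms(3) and cr = assms(4)
    and dc = assms(5) and scs = assms(6)
  have inC: "\<And>j. j < length cs \<Longrightarrow> cs!j \<in> cliques_of_order (set vs) E w"
    using scs nth_mem by blast
  show "transpose_mat (incidence_matrix vs cs) * incidence_matrix vs cs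
           = clique_graph_adj_matrix cs + of_nat w \<cdot>\<^sub>m 1\<^sub>m (length cs)"
  proof (rule eq_matI)
    fix j k assume j: "j < dim_row (clique_graph_adj_matrix cs + of_nat w \<cdot>\<^sub>m 1\<^sub>m (length cs))"
      and k: "k < dim_col (clique_graph_adj_matrix cs + of_nat w \<cdot>\<^sub>m 1\<^sub>m (length cs))"
    then have j': "j < length cs" and k': "k < length cs"
      by (auto simp: clique_graph_adj_matrix_def)
    have sub: "\<And>j. j < length cs \<Longrightarrow> cs!j \<inter> set vs = cs!j \<and> card (cs!j) = w"
    proof -
      fix j assume "j < length cs"
      then have "cs!j \<subseteq> set vs \<and> card (cs!j) = w"
        using inC by (simp add: cliques_of_order_def is_clique_def)
      then show "cs!j \<inter> set vs = cs!j \<and> card (cs!j) = w" by blast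
    qed
    show "(transpose_mat (incidence_matrix vs cs) * incidence_matrix vs cs) $$ (j, k) =
          (clique_graph_adj_matrix cs + of_nat w \<cdot>\<^sub>m 1\<^sub>m (length cs)) $$ (j, k)"
    proof (cases "j = k")
      case True
      then show ?thesis using j' RtR_entry[OF j' k' dv] sub[OF j']
        by (simp add: clique_graph_adj_matrix_def)
    next
      case False
      then have ne: "cs!j \<noteq> cs!k" using dc j' k' by (simp add: nth_eq_iff_index_eq)
      have "cs!j \<inter> cs!k \<inter> set vs = cs!j \<inter> cs!k" using sub[OF j'] by blast
      then show ?thesis using False j' k' RtR_entry[OF j' k' dv]
          inter_card[OF cr inC[OF j'] inC[OF k'] ne]
        by (simp add: clique_graph_adj_matrix_def)
    qed
  qed (auto simp: clique_graph_adj_matrix_def incidence_matrix_def)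
  show "incidence_matrix vs cs * transpose_mat (incidence_matrix vs cs)
           = adj_matrix vs E + (1 / (real w - 1)) \<cdot>\<^sub>m degree_matrix vs E"
  proof (rule eq_matI)
    fix i i' assume i: "i < dim_row (adj_matrix vs E + (1 / (real w - 1)) \<cdot>\<^sub>m degree_matrix vs E)"
      and i2: "i' < dim_col (adj_matrix vs E + (1 / (real w - 1)) \<cdot>\<^sub>m degree_matrix vs E)"
    then have i': "i < length vs" and i2': "i' < length vs"
      by (auto simp: adj_matrix_def degree_matrix_def)
    show "(incidence_matrix vs cs * transpose_mat (incidence_matrix vs cs)) $$ (i, i') =
          (adj_matrix vs E + (1 / (real w - 1)) \<cdot>\<^sub>m degree_matrix vs E) $$ (i, i')"
    proof (cases "i = i'")
      case True
      have nE: "\<not> E (vs!i) (vs!i)" using sg by (simp add: simple_graph_def)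
      have dg: "real (degree (set vs) E (vs!i)) =
          (real w - 1) * real (card {K\<in>cliques_of_order (set vs) E w. vs!i \<in> K})"
        using degree_count[OF sg cr nth_mem[OF i']] w by (simp add: of_nat_diff)
      have "real w - 1 \<noteq> 0" using w by simp
      then show ?thesis using True i' RRt_entry[OF i' i' dc] nE dg scs
        by (simp add: adj_matrix_def degree_matrix_def)
    next
      case False
      then have ne: "vs!i \<noteq> vs!i'" using dv i' i2' by (simp add: nth_eq_iff_index_eq)
      show ?thesis using False i' i2' RRt_entry[OF i' i2' dc] pair_count[OF cr ne] scs
        by (simp add: adj_matrix_def degree_matrix_def)
    qed
  qed (auto simp: adj_matrix_def incidence_matrix_def degree_matrix_def)
qed

end
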